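(* Assume Assumption (I). Let $u_k\in V$ and $\epsilon_k>0$ be given. Then there exists $L\in\{0\}\cup\{\tilde L\gamma^l: l\in\mathbb N_0\}$ such that the (unique) minimizer $u_{k+1}$ of problem (Q$_{k,L}$) satisfies the descent condition (D$_{k,L}$); in particular $L_k$ and $u_{k+1}$ in Algorithm A are well defined. Moreover, if the sequence $(u_k)$ generated by Algorithm A is bounded in $V$, then $(L_k)$ is bounded.
   Context: Standing assumptions: $\Omega\subset\mathbb R^d$ bounded Lipschitz domain; $V$ real Hilbert space with inner product $\langle\cdot,\cdot\rangle_V$, $V\subset L^2(\Omega)$ with compact and dense embedding; $V^*$ dual. $F:V\to\mathbb R$ weakly lower semicontinuous, bounded below by an affine function, continuously Fréchet differentiable. $\alpha>0$, $\beta>0$, $p\in(0,1)$. Assumption (I): the standing assumptions hold; $F'$ is completely continuous ($u_n\rightharpoonup u$ in $V$ implies $F'(u_n)\to F'(u)$ in $V^*$); and $F':V\to V^*$ is Lipschitz continuous on bounded sets. For $\epsilon>0$, $\psi_\epsilon(t)=\frac p2\frac{t}{\epsilon^{2-p}}+(1-\frac p2)\epsilon^p$ if $t\in[0,\epsilon^2)$, $\psi_\epsilon(t)=t^{p/2}$ if $t\ge\epsilon^2$, $\psi_\epsilon'(t)=\frac p2\min(\epsilon^{p-2},t^{(p-2)/2})$. Algorithm A: choose a monotonically decreasing sequence $\epsilon_k\searrow0$, constants $\gamma>1$, $\tilde L>0$, and $u_0\in V$. Given $u_k$, for $L\ge0$ let problem (Q$_{k,L}$) be $\min_{u\in V} F(u_k)+F'(u_k)(u-u_k)+\frac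 L2\|u-u_k\|_V^2+\frac\alpha2\|u\|_V^2+\beta\int_\Omega\big[\psi_{\epsilon_k}(u_k^2)+\psi_{\epsilon_k}'(u_k^2)(u^2-u_k^2)\big]dx$ (strongly convex, unique minimizer), and let (D$_{k,L}$) be the condition $F(u_{k+1})\le F(u_k)+F'(u_k)(u_{k+1}-u_k)+L\|u_{k+1}-u_k\|_V^2$ for its minimizer $u_{k+1}$. $L_k$ is the smallest $L\in\{0\}\cup\{\tilde L\gamma^l:l\ge0\}$ for which (D$_{k,L}$) holds, and $u_{k+1}$ is the corresponding minimizer; then $k\mapsto k+1$. *)

theory Defs
  imports "HOL-Analysis.Analysis"
begin

definition bounded_lipschitz_domain :: "'a::euclidean_space set \<Rightarrow> bool" where
  "bounded_lipschitz_domain \<Omega> \<longleftrightarrow>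
     open \<Omega> \<and> connected \<Omega> \<and> \<Omega> \<noteq> {} \<and> bounded \<Omega> \<and>
     (\<forall>x\<in>frontier \<Omega>. \<exists>r>0. \<exists>n::'a. \<exists>g::'a \<Rightarrow> real. \<exists>C.
        norm n = 1 \<and> C-lipschitz_on {z. z \<bullet> n = 0} g \<and>
        \<Omega> \<inter> ball x r = {y \<in> ball x r. y \<bullet> n < g (y - (y \<bullet> n) *\<^sub>R n)})"

definition L2fun :: "'a::euclidean_space set \<Rightarrow> ('a \<Rightarrow> real) \<Rightarrow> bool" where
  "L2fun \<Omega> f \<longleftrightarrow> f \<in> borel_measurable (lebesgue_on \<Omega>) \<and>
                  integrable (lebesgue_on \<Omega>) (\<lambda>x. (f x)\<^sup>2)"

definition L2norm :: "'a::euclidean_space set \<Rightarrow> ('a \<Rightarrow> real) \<Rightarrow> real" where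
  "L2norm \<Omega> f = sqrt (\<integral>x. (f x)\<^sup>2 \<partial>lebesgue_on \<Omega>)"

text \<open>The Hilbert space V (a type of class real_inner + complete_space) is identified with
  a subspace of L^2(Omega) through iota, which assigns to each element a representative.\<close>
definition compact_dense_L2_embedding ::
    "'a::euclidean_space set \<Rightarrow> ('v::{real_inner,complete_space} \<Rightarrow> 'a \<Rightarrow> real) \<Rightarrow> bool" where
  "compact_dense_L2_embedding \<Omega> \<iota> \<longleftrightarrow>
     (\<forall>u. L2fun \<Omega> (\<iota> u)) \<and>
     (\<forall>u w. AE x in lebesgue_on \<Omega>. \<iota> (u + w) x = \<iota> u x + \<iota> w x) \<and>
     (\<forall>c u. AE x in lebesgue_on \<Omega>. \<iota> (c *\<^sub>R u) x = c * \<iota> u x) \<and>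
     (\<forall>u w. (AE x in lebesgue_on \<Omega>. \<iota> u x = \<iota> w x) \<longrightarrow> u = w) \<and>
     (\<exists>K. \<forall>u. L2norm \<Omega> (\<iota> u) \<le> K * norm u) \<and>
     (\<forall>s::nat \<Rightarrow> 'v. bounded (range s) \<longrightarrow>
        (\<exists>r f. strict_mono r \<and> L2fun \<Omega> f \<and>
               (\<lambda>n. L2norm \<Omega> (\<lambda>x. \<iota> (s (r n)) x - f x)) \<longlonglongrightarrow> 0)) \<and>
     (\<forall>f. L2fun \<Omega> f \<longrightarrow> (\<forall>e>0. \<exists>u. L2norm \<Omega> (\<lambda>x. \<iota> u x - f x) < e))"

definition weakly_conv :: "(nat \<Rightarrow> 'v::real_inner) \<Rightarrow> 'v \<Rightarrow> bool" where
  "weakly_conv s u \<longleftrightarrow> (\<forall>w. (\<lambda>n. inner (s n) w) \<longlonglongrightarrow> inner u w)"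

definition weakly_lsc :: "('v::real_inner \<Rightarrow> real) \<Rightarrow> bool" where
  "weakly_lsc F \<longleftrightarrow> (\<forall>s u. weakly_conv s u \<longrightarrow>
                       ereal (F u) \<le> liminf (\<lambda>n. ereal (F (s n))))"

definition bounded_below_affine :: "('v::real_normed_vector \<Rightarrow> real) \<Rightarrow> bool" where
  "bounded_below_affine F \<longleftrightarrow> (\<exists>l c. bounded_linear l \<and> (\<forall>u. l u + c \<le> F u))"

definition standing_F :: "('v::{real_inner,complete_space} \<Rightarrow> real) \<Rightarrow> ('v \<Rightarrow> ('v \<Rightarrow>\<^sub>L real)) \<Rightarrow> bool" where
  "standing_F F F' \<longleftrightarrow> weakly_lsc F \<and> bounded_below_affine F \<and>
      (\<forall>u. (F has_derivative blinfun_apply (F' u)) (at u)) \<and> continuous_on UNIV F'"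

definition assumption_I_F :: "('v::{real_inner,complete_space} \<Rightarrow> real) \<Rightarrow> ('v \<Rightarrow> ('v \<Rightarrow>\<^sub>L real)) \<Rightarrow> bool" where
  "assumption_I_F F F' \<longleftrightarrow> standing_F F F' \<and>
      (\<forall>s u. weakly_conv s u \<longrightarrow> (\<lambda>n. F' (s n)) \<longlonglongrightarrow> F' u) \<and>
      (\<forall>B. bounded B \<longrightarrow> (\<exists>M. \<forall>u\<in>B. \<forall>w\<in>B. norm (F' u - F' w) \<le> M * norm (u - w)))"

definition psi :: "real \<Rightarrow> real \<Rightarrow> real \<Rightarrow> real" where
  "psi p \<epsilon> t = (if t < \<epsilon>\<^sup>2 then p / 2 * t / \<epsilon> powr (2 - p) + (1 - p / 2) * \<epsilon> powr p
                 else t powr (p / 2))"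

text \<open>psi' = p/2 min(eps^(p-2), t^((p-2)/2)); written piecewise so that t = 0 gives
  p/2 eps^(p-2) (t^((p-2)/2) = +infinity there, while Isabelle's 0 powr a is 0).\<close>
definition dpsi :: "real \<Rightarrow> real \<Rightarrow> real \<Rightarrow> real" where
  "dpsi p \<epsilon> t = (if t < \<epsilon>\<^sup>2 then p / 2 * \<epsilon> powr (p - 2) else p / 2 * t powr ((p - 2) / 2))"

definition Qobj ::
  "'a::euclidean_space set \<Rightarrow> ('v::{real_inner,complete_space} \<Rightarrow> 'a \<Rightarrow> real) \<Rightarrow>
   ('v \<Rightarrow> real) \<Rightarrow> ('v \<Rightarrow> ('v \<Rightarrow>\<^sub>L real)) \<Rightarrow> real \<Rightarrow> real \<Rightarrow> real \<Rightarrow>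
   real \<Rightarrow> 'v \<Rightarrow> real \<Rightarrow> 'v \<Rightarrow> real" where
  "Qobj \<Omega> \<iota> F F' \<alpha> \<beta> p \<epsilon> uk L u =
     F uk + F' uk (u - uk) + L / 2 * (norm (u - uk))\<^sup>2 + \<alpha> / 2 * (norm u)\<^sup>2
     + \<beta> * (\<integral>x. psi p \<epsilon> ((\<iota> uk x)\<^sup>2) + dpsi p \<epsilon> ((\<iota> uk x)\<^sup>2) * ((\<iota> u x)\<^sup>2 - (\<iota> uk x)\<^sup>2)
              \<partial>lebesgue_on \<Omega>)"

definition is_Qmin ::
  "'a::euclidean_space set \<Rightarrow> ('v::{real_inner,complete_space} \<Rightarrow> 'a \<Rightarrow> real) \<Rightarrow>
   ('v \<Rightarrow> real) \<Rightarrow> ('v \<Rightarrow> ('v \<Rightarrow>\<^sub>L real)) \<Rightarrow> real \<Rightarrow> real \<Rightarrow> real \<Rightarrow>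
   real \<Rightarrow> 'v \<Rightarrow> real \<Rightarrow> 'v \<Rightarrow> bool" where
  "is_Qmin \<Omega> \<iota> F F' \<alpha> \<beta> p \<epsilon> uk L u \<longleftrightarrow>
     (\<forall>w. Qobj \<Omega> \<iota> F F' \<alpha> \<beta> p \<epsilon> uk L u \<le> Qobj \<Omega> \<iota> F F' \<alpha> \<beta> p \<epsilon> uk L w)"

definition descent ::
  "('v::{real_inner,complete_space} \<Rightarrow> real) \<Rightarrow> ('v \<Rightarrow> ('v \<Rightarrow>\<^sub>L real)) \<Rightarrow> 'v \<Rightarrow> real \<Rightarrow> 'v \<Rightarrow> bool" where
  "descent F F' uk L u \<longleftrightarrow> F u \<le> F uk + F' uk (u - uk) + L * (norm (u - uk))\<^sup>2"

definition Lset :: "real \<Rightarrow> real \<Rightarrow> real set" where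
  "Lset Ltil \<gamma> = {0} \<union> range (\<lambda>l::nat. Ltil * \<gamma> ^ l)"

definition algorithm_A ::
  "'a::euclidean_space set \<Rightarrow> ('v::{real_inner,complete_space} \<Rightarrow> 'a \<Rightarrow> real) \<Rightarrow>
   ('v \<Rightarrow> real) \<Rightarrow> ('v \<Rightarrow> ('v \<Rightarrow>\<^sub>L real)) \<Rightarrow> real \<Rightarrow> real \<Rightarrow> real \<Rightarrow>
   real \<Rightarrow> real \<Rightarrow> (nat \<Rightarrow> real) \<Rightarrow> (nat \<Rightarrow> 'v) \<Rightarrow> (nat \<Rightarrow> real) \<Rightarrow> bool" where
  "algorithm_A \<Omega> \<iota> F F' \<alpha> \<beta> p \<gamma> Ltil eps u Lk \<longleftrightarrow>
     \<gamma> > 1 \<and> Ltil > 0 \<and> decseq eps \<and> (\<forall>k. eps k > 0) \<and> eps \<longlonglongrightarrow> 0 \<and>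
     (\<forall>k. Lk k \<in> Lset Ltil \<gamma> \<and>
          is_Qmin \<Omega> \<iota> F F' \<alpha> \<beta> p (eps k) (u k) (Lk k) (u (Suc k)) \<and>
          descent F F' (u k) (Lk k) (u (Suc k)) \<and>
          (\<forall>L'\<in>Lset Ltil \<gamma>. L' < Lk k \<longrightarrow>
             (\<forall>w. is_Qmin \<Omega> \<iota> F F' \<alpha> \<beta> p (eps k) (u k) L' w \<longrightarrow> \<not> descent F F' (u k) L' w)))"

end

theory Submission
  imports Defs
begin


lemma mid_norm_sq:
  fixes u w :: "'v::real_inner"
  shows "(norm ((1/2) *\<^sub>R (u + w)))\<^sup>2 = ((norm u)\<^sup>2 + (norm w)\<^sup>2)/2 - (norm (u - w))\<^sup>2/4"
  by (simp add: power2_norm_eq_inner inner_add inner_diff inner_commute algebra_simps) (simp add: field_simps)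

lemma strongly_convex_min:
  fixes Q :: "'v::{real_inner,complete_space} \<Rightarrow> real"
  assumes cont: "continuous_on UNIV Q"
    and mid: "\<And>u w. Q ((1/2) *\<^sub>R (u + w)) \<le> (Q u + Q w)/2 - c * (norm (u - w))\<^sup>2"
    and c: "c > 0"
    and bdd: "\<And>u. m0 \<le> Q u"
  shows "\<exists>!u. \<forall>w. Q u \<le> Q w"
proof -
  define m where "m = Inf (range Q)"
  have bb: "bdd_below (range Q)" using bdd unfolding bdd_below_def by auto
  have mle: "m \<le> Q w" for w unfolding m_def using bb by (simp add: cInf_lower)
  have "\<exists>v. Q v < m + 1/(Suc n)" for n
  proof -
    have "Inf (range Q) < m + 1/Suc n" unfolding m_def by simp
    then show ?thesis using cInf_lessD[of "range Q"] by blast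
  qed
  then obtain s where s: "\<And>n. Q (s n) < m + 1/(Suc n)" by metis
  have key: "c * (norm (s i - s j))\<^sup>2 < 1/Suc i + 1/Suc j" for i j
  proof -
    have "m \<le> Q ((1/2) *\<^sub>R (s i + s j))" by (rule mle)
    also have "\<dots> \<le> (Q (s i) + Q (s j))/2 - c * (norm (s i - s j))\<^sup>2" by (rule mid)
    finally have "c * (norm (s i - s j))\<^sup>2 \<le> (Q (s i) + Q (s j))/2 - m" by simp
    moreover have "0 \<le> 1 / real (Suc i)" "0 \<le> 1 / real (Suc j)" by auto
    ultimately show ?thesis using s[of i] s[of j] by argo
  qed
  have "Cauchy s"
  proof (rule metric_CauchyI)
    fix e :: real assume e: "e > 0"
    obtain N where N: "2 / (c * e\<^sup>2) < real N" using reals_Archimedean2 by blast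
    have "dist (s i) (s j) < e" if "i \<ge> N" "j \<ge> N" for i j
    proof -
      have "1/Suc i \<le> 1/Suc N" "1/Suc j \<le> 1/Suc N" using that by (auto simp: field_simps)
      with key[of i j] have "c * (norm (s i - s j))\<^sup>2 < 2 / Suc N" by simp
      also have "2 / Suc N < c * e\<^sup>2"
        using N c e by (simp add: field_simps) (smt (verit) mult_pos_pos zero_less_power)
      finally have "(norm (s i - s j))\<^sup>2 < e\<^sup>2" using c by simp
      then show ?thesis using e by (simp add: dist_norm power_less_imp_less_base)
    qed
    then show "\<exists>M. \<forall>m\<ge>M. \<forall>n\<ge>M. dist (s m) (s n) < e" by blast
  qed
  then obtain u where u: "s \<longlonglongrightarrow> u" using Cauchy_convergent_iff convergent_def by blast
  have t1: "(\<lambda>n. Q (s n)) \<longlonglongrightarrow> Q u"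
    using cont u by (metis continuous_on_tendsto_compose UNIV_I eventually_sequentiallyI)
  have t2: "(\<lambda>n. Q (s n)) \<longlonglongrightarrow> m"
  proof (rule tendsto_sandwich[of "\<lambda>n. m" _ _ "\<lambda>n. m + 1/Suc n"])
    show "\<forall>\<^sub>F n in sequentially. m \<le> Q (s n)" using mle by simp
    show "\<forall>\<^sub>F n in sequentially. Q (s n) \<le> m + 1/Suc n" using s less_imp_le by (intro always_eventually) blast
    show "(\<lambda>n. m) \<longlonglongrightarrow> m" by simp
    have "(\<lambda>n. 1 / Suc n) \<longlonglongrightarrow> (0::real)" using LIMSEQ_inverse_real_of_nat
      by (simp add: inverse_eq_divide)
    then show "(\<lambda>n. m + 1/Suc n) \<longlonglongrightarrow> m" using tendsto_add[of "\<lambda>n. m" m sequentially] by fastforce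
  qed
  have "Q u = m" using t1 t2 LIMSEQ_unique by blast
  then have ex: "\<forall>w. Q u \<le> Q w" using mle by simp
  show ?thesis
  proof (rule ex1I[of _ u])
    show "\<forall>w. Q u \<le> Q w" by (rule ex)
    fix w assume w: "\<forall>x. Q w \<le> Q x"
    have "Q w \<le> Q ((1/2) *\<^sub>R (w + u))" "Q u \<le> Q ((1/2) *\<^sub>R (w + u))" using w ex by auto
    moreover have "Q ((1/2) *\<^sub>R (w + u)) \<le> (Q w + Q u)/2 - c * (norm (w - u))\<^sup>2" by (rule mid)
    ultimately have "c * (norm (w - u))\<^sup>2 \<le> 0" by argo
    then have "(norm (w - u))\<^sup>2 \<le> 0" using c by (simp add: mult_le_0_iff)
    then show "w = u" by simp
  qed
qed


lemma sq_powr: "0 < (e::real) \<Longrightarrow> e\<^sup>2 = e powr 2"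
  by (simp add: powr_numeral)

lemma eps_pow: assumes "0 < (e::real)" shows "(e\<^sup>2) powr ((p - 2)/2) = e powr (p - 2)"
proof -
  have "(e\<^sup>2) powr ((p - 2)/2) = (e powr 2) powr ((p - 2)/2)" by (simp only: sq_powr[OF assms])
  also have "\<dots> = e powr (2 * ((p - 2)/2))" by (simp only: powr_powr)
  also have "2 * ((p - 2)/2) = p - 2" by simp
  finally show ?thesis .
qed

lemma eps_pow2: assumes "0 < (e::real)" shows "e powr (p - 2) * e\<^sup>2 = e powr p"
proof -
  have "e powr (p - 2) * e\<^sup>2 = e powr (p - 2) * e powr 2" by (simp only: sq_powr[OF assms])
  also have "\<dots> = e powr (p - 2 + 2)" by (simp only: powr_add)
  finally show ?thesis by simp
qed

lemma eps_pow3: assumes "0 < (e::real)" shows "e\<^sup>2 / e powr (2 - p) = e powr p"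
proof -
  have "e\<^sup>2 / e powr (2 - p) = e powr 2 / e powr (2 - p)" by (simp only: sq_powr[OF assms])
  also have "\<dots> = e powr (2 - (2 - p))" by (simp only: powr_diff)
  finally show ?thesis by simp
qed

lemma dpsi_nonneg: "0 < p \<Longrightarrow> 0 \<le> dpsi p e t"
  unfolding dpsi_def by auto

lemma dpsi_le: assumes "0 < p" "p < 1" "0 < e" shows "dpsi p e t \<le> p/2 * e powr (p - 2)"
proof (cases "t < e\<^sup>2")
  case True then show ?thesis by (simp add: dpsi_def)
next
  case False
  then have t: "e\<^sup>2 \<le> t" "0 < e\<^sup>2" using assms by auto
  have "t powr ((p - 2)/2) \<le> (e\<^sup>2) powr ((p-2)/2)"
    by (rule powr_mono2') (use assms t in auto)
  also have "\<dots> = e powr (p - 2)" using assms by (simp add: eps_pow)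
  finally show ?thesis using False assms by (simp add: dpsi_def)
qed

lemma powr_half_le: assumes "0 \<le> (t::real)" and "(0::real) < p" and "p < 1" shows "t powr (p/2) \<le> 1 + t"
proof (cases "t \<le> 1")
  case True
  then have "t powr (p/2) \<le> 1" using assms by (simp add: powr_le1)
  then show ?thesis using assms by linarith
next
  case False
  then have "t powr (p/2) \<le> t powr 1" using assms by (intro powr_mono) auto
  then show ?thesis using False by simp
qed

lemma psi_nonneg: assumes "0 \<le> t" "0 < p" "p < 1" "0 < e" shows "0 \<le> psi p e t"
  using assms unfolding psi_def by auto

lemma psi_le: assumes "0 \<le> t" "0 < p" "p < 1" "0 < e" shows "psi p e t \<le> e powr p + 1 + t"
proof (cases "t < e\<^sup>2")
  case True
  have "p / 2 * t / e powr (2 - p) \<le> p/2 * e\<^sup>2 / e powr (2 - p)"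
    using True assms by (intro divide_right_mono mult_left_mono) auto
  also have "\<dots> = p/2 * (e\<^sup>2 / e powr (2 - p))" by simp
  also have "\<dots> = p/2 * e powr p" using assms by (simp only: eps_pow3)
  finally have "psi p e t \<le> p/2 * e powr p + (1 - p/2) * e powr p" using True by (simp add: psi_def)
  also have "\<dots> = e powr p" by (simp add: algebra_simps)
  finally show ?thesis using assms by simp
next
  case False
  have "0 \<le> e powr p" by simp
  moreover have "psi p e t = t powr (p/2)" using False by (simp add: psi_def)
  ultimately show ?thesis using powr_half_le[OF assms(1-3)] by linarith
qed

lemma dpsi_t_le: assumes "0 \<le> t" "0 < p" "p < 1" "0 < e" shows "dpsi p e t * t \<le> p/2 * (1 + t)"
proof (cases "t < e\<^sup>2")
  case True
  have "e powr (p - 2) * t \<le> 1 + t"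
  proof (cases "e \<le> 1")
    case True2: True
    have "e powr (p - 2) * t \<le> e powr (p - 2) * e\<^sup>2" using True assms by (intro mult_left_mono) auto
    also have "\<dots> = e powr p" using assms by (simp add: eps_pow3 eps_pow2)
    also have "\<dots> \<le> 1" using True2 assms by (simp add: powr_le1)
    finally show ?thesis using assms by linarith
  next
    case False
    have "e powr (p - 2) \<le> e powr 0" using False assms by (intro powr_mono) auto
    then have "e powr (p - 2) * t \<le> 1 * t" using assms by (intro mult_right_mono) auto
    then show ?thesis by simp
  qed
  then show ?thesis using True assms by (simp add: dpsi_def)
next
  case False
  then have t: "0 < t" using assms by (smt (verit) zero_less_power)
  have "t powr ((p - 2)/2) * t = t powr ((p-2)/2 + 1)" using t by (simp add: powr_add)
  also have "(p-2)/2 + 1 = p/2" by (simp add: field_simps)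
  finally have "dpsi p e t * t = p/2 * t powr (p/2)" using False by (simp add: dpsi_def)
  also have "\<dots> \<le> p/2 * (1 + t)" using powr_half_le[OF assms(1-3)] assms by simp
  finally show ?thesis .
qed


definition qf :: "'a::euclidean_space set \<Rightarrow> ('v \<Rightarrow> 'a \<Rightarrow> real) \<Rightarrow> ('a \<Rightarrow> real) \<Rightarrow> 'v \<Rightarrow> real" where
  "qf \<Omega> \<iota> d u = (\<integral>x. d x * (\<iota> u x)\<^sup>2 \<partial>lebesgue_on \<Omega>)"

context
  fixes \<Omega> :: "'a::euclidean_space set" and \<iota> :: "'v::{real_inner,complete_space} \<Rightarrow> 'a \<Rightarrow> real"
  assumes emb: "compact_dense_L2_embedding \<Omega> \<iota>"
begin

lemma emb_meas: "\<iota> u \<in> borel_measurable (lebesgue_on \<Omega>)"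
  using emb unfolding compact_dense_L2_embedding_def L2fun_def by blast

lemma emb_sq_int: "integrable (lebesgue_on \<Omega>) (\<lambda>x. (\<iota> u x)\<^sup>2)"
  using emb unfolding compact_dense_L2_embedding_def L2fun_def by blast

lemma emb_add: "AE x in lebesgue_on \<Omega>. \<iota> (u + w) x = \<iota> u x + \<iota> w x"
  using emb unfolding compact_dense_L2_embedding_def by blast

lemma emb_scale: "AE x in lebesgue_on \<Omega>. \<iota> (c *\<^sub>R u) x = c * \<iota> u x"
  using emb unfolding compact_dense_L2_embedding_def by blast

lemma emb_bound: "\<exists>K\<ge>0. \<forall>u. (\<integral>x. (\<iota> u x)\<^sup>2 \<partial>lebesgue_on \<Omega>) \<le> K * (norm u)\<^sup>2"
proof -
  obtain K where K: "\<And>u. L2norm \<Omega> (\<iota> u) \<le> K * norm u"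
    using emb unfolding compact_dense_L2_embedding_def by blast
  define K0 where "K0 = max K 0"
  have "(\<integral>x. (\<iota> u x)\<^sup>2 \<partial>lebesgue_on \<Omega>) \<le> K0\<^sup>2 * (norm u)\<^sup>2" for u
  proof -
    have i0: "0 \<le> (\<integral>x. (\<iota> u x)\<^sup>2 \<partial>lebesgue_on \<Omega>)" by (intro integral_nonneg_AE) auto
    have "L2norm \<Omega> (\<iota> u) \<le> K0 * norm u" using K[of u] unfolding K0_def
      by (smt (verit) mult_right_mono norm_ge_zero)
    moreover have "0 \<le> L2norm \<Omega> (\<iota> u)" unfolding L2norm_def by simp
    ultimately have "(L2norm \<Omega> (\<iota> u))\<^sup>2 \<le> (K0 * norm u)\<^sup>2" by (intro power_mono) auto
    then show ?thesis using i0 unfolding L2norm_def by (simp add: power_mult_distrib)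
  qed
  then show ?thesis by (intro exI[of _ "K0\<^sup>2"]) auto
qed

context
  fixes d :: "'a \<Rightarrow> real" and D :: real
  assumes dm: "d \<in> borel_measurable (lebesgue_on \<Omega>)"
    and d0: "\<And>x. 0 \<le> d x" and dD: "\<And>x. d x \<le> D"
begin

lemma q_int: "integrable (lebesgue_on \<Omega>) (\<lambda>x. d x * (\<iota> u x)\<^sup>2)"
proof -
  have A: "integrable (lebesgue_on \<Omega>) (\<lambda>x. D * (\<iota> u x)\<^sup>2)" using emb_sq_int by simp
  have B: "(\<lambda>x. d x * (\<iota> u x)\<^sup>2) \<in> borel_measurable (lebesgue_on \<Omega>)"
    using dm emb_meas by measurable
  have C: "AE x in lebesgue_on \<Omega>. norm (d x * (\<iota> u x)\<^sup>2) \<le> norm (D * (\<iota> u x)\<^sup>2)"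
  proof (intro AE_I2)
    fix x
    have "\<bar>d x\<bar> \<le> \<bar>D\<bar>" using d0[of x] dD[of x] by linarith
    then show "norm (d x * (\<iota> u x)\<^sup>2) \<le> norm (D * (\<iota> u x)\<^sup>2)"
      by (simp add: abs_mult mult_right_mono)
  qed
  show ?thesis by (rule Bochner_Integration.integrable_bound[OF A B C])
qed

lemma q_nonneg: "0 \<le> qf \<Omega> \<iota> d u"
  unfolding qf_def using d0 by (intro integral_nonneg_AE) auto

lemma D_nonneg: "0 \<le> D" using d0 dD by (meson order_trans)

lemma q_le: "qf \<Omega> \<iota> d u \<le> D * (\<integral>x. (\<iota> u x)\<^sup>2 \<partial>lebesgue_on \<Omega>)"
proof -
  have "qf \<Omega> \<iota> d u \<le> (\<integral>x. D * (\<iota> u x)\<^sup>2 \<partial>lebesgue_on \<Omega>)"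
    unfolding qf_def using q_int emb_sq_int dD
    by (intro integral_mono) (auto intro!: mult_right_mono)
  then show ?thesis by simp
qed

lemma q_mid: "qf \<Omega> \<iota> d ((1/2) *\<^sub>R (u + w)) \<le> (qf \<Omega> \<iota> d u + qf \<Omega> \<iota> d w)/2"
proof -
  have ae: "AE x in lebesgue_on \<Omega>. \<iota> ((1/2) *\<^sub>R (u + w)) x = (1/2) * (\<iota> u x + \<iota> w x)"
    using emb_add[of u w] emb_scale[of "1/2" "u + w"] by eventually_elim simp
  have "qf \<Omega> \<iota> d ((1/2) *\<^sub>R (u + w)) \<le> (\<integral>x. (d x * (\<iota> u x)\<^sup>2 + d x * (\<iota> w x)\<^sup>2) / 2 \<partial>lebesgue_on \<Omega>)"
    unfolding qf_def
  proof (rule integral_mono_AE)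
    show "integrable (lebesgue_on \<Omega>) (\<lambda>x. d x * (\<iota> ((1/2) *\<^sub>R (u + w)) x)\<^sup>2)" by (rule q_int)
    show "integrable (lebesgue_on \<Omega>) (\<lambda>x. (d x * (\<iota> u x)\<^sup>2 + d x * (\<iota> w x)\<^sup>2) / 2)"
      using q_int by auto
    show "AE x in lebesgue_on \<Omega>. d x * (\<iota> ((1/2) *\<^sub>R (u + w)) x)\<^sup>2 \<le> (d x * (\<iota> u x)\<^sup>2 + d x * (\<iota> w x)\<^sup>2) / 2"
      using ae
    proof eventually_elim
      case (elim x)
      have "((1/2) * (\<iota> u x + \<iota> w x))\<^sup>2 \<le> ((\<iota> u x)\<^sup>2 + (\<iota> w x)\<^sup>2)/2"
        using sum_squares_ge_zero[of "\<iota> u x - \<iota> w x" 0] by (simp add: power2_eq_square algebra_simps)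
      then have "d x * ((1/2) * (\<iota> u x + \<iota> w x))\<^sup>2 \<le> d x * (((\<iota> u x)\<^sup>2 + (\<iota> w x)\<^sup>2)/2)"
        by (intro mult_left_mono d0)
      then show ?case using elim by (simp add: algebra_simps)
    qed
  qed
  also have "\<dots> = (qf \<Omega> \<iota> d u + qf \<Omega> \<iota> d w)/2"
    unfolding qf_def using q_int by simp
  finally show ?thesis .
qed

lemma sq_diff_bound:
  fixes a h \<eta> :: real assumes "\<eta> > 0"
  shows "\<bar>(a + h)\<^sup>2 - a\<^sup>2\<bar> \<le> \<eta> * a\<^sup>2 + (1 + 1/\<eta>) * h\<^sup>2"
proof -
  have "0 \<le> (\<eta> * \<bar>a\<bar> - \<bar>h\<bar>)\<^sup>2 / \<eta>" using assms by simp
  also have "(\<eta> * \<bar>a\<bar> - \<bar>h\<bar>)\<^sup>2 / \<eta> = \<eta> * a\<^sup>2 + h\<^sup>2/\<eta> - 2 * \<bar>a\<bar> * \<bar>h\<bar>"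
    using assms by (simp add: power2_eq_square field_simps)
  finally have 1: "2 * \<bar>a\<bar> * \<bar>h\<bar> \<le> \<eta> * a\<^sup>2 + h\<^sup>2/\<eta>" by simp
  have "\<bar>(a + h)\<^sup>2 - a\<^sup>2\<bar> = \<bar>2 * a * h + h\<^sup>2\<bar>" by (simp add: power2_eq_square algebra_simps)
  also have "\<dots> \<le> 2 * \<bar>a\<bar> * \<bar>h\<bar> + h\<^sup>2" by (rule order_trans[OF abs_triangle_ineq]) (simp add: abs_mult)
  also have "\<dots> \<le> \<eta> * a\<^sup>2 + (1 + 1/\<eta>) * h\<^sup>2" using 1 by (simp add: algebra_simps)
  finally show ?thesis .
qed

lemma q_diff_bound:
  assumes eta: "\<eta> > 0"
  shows "\<bar>qf \<Omega> \<iota> d v - qf \<Omega> \<iota> d u\<bar> \<le> \<eta> * qf \<Omega> \<iota> d u + (1 + 1/\<eta>) * D * (\<integral>x. (\<iota> (v - u) x)\<^sup>2 \<partial>lebesgue_on \<Omega>)"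
proof -
  have ae: "AE x in lebesgue_on \<Omega>. \<iota> v x = \<iota> u x + \<iota> (v - u) x"
    using emb_add[of u "v - u"] by simp
  have "qf \<Omega> \<iota> d v - qf \<Omega> \<iota> d u = (\<integral>x. d x * (\<iota> v x)\<^sup>2 - d x * (\<iota> u x)\<^sup>2 \<partial>lebesgue_on \<Omega>)"
    unfolding qf_def using q_int by simp
  also have "\<bar>\<dots>\<bar> \<le> (\<integral>x. \<bar>d x * (\<iota> v x)\<^sup>2 - d x * (\<iota> u x)\<^sup>2\<bar> \<partial>lebesgue_on \<Omega>)"
    using integral_norm_bound[of "lebesgue_on \<Omega>" "\<lambda>x. d x * (\<iota> v x)\<^sup>2 - d x * (\<iota> u x)\<^sup>2"] by simp
  also have "\<dots> \<le> (\<integral>x. \<eta> * (d x * (\<iota> u x)\<^sup>2) + (1 + 1/\<eta>) * D * (\<iota> (v - u) x)\<^sup>2 \<partial>lebesgue_on \<Omega>)"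
  proof (rule integral_mono_AE)
    show "integrable (lebesgue_on \<Omega>) (\<lambda>x. \<bar>d x * (\<iota> v x)\<^sup>2 - d x * (\<iota> u x)\<^sup>2\<bar>)"
      using q_int by auto
    show "integrable (lebesgue_on \<Omega>) (\<lambda>x. \<eta> * (d x * (\<iota> u x)\<^sup>2) + (1 + 1/\<eta>) * D * (\<iota> (v - u) x)\<^sup>2)"
      using q_int emb_sq_int by auto
    show "AE x in lebesgue_on \<Omega>. \<bar>d x * (\<iota> v x)\<^sup>2 - d x * (\<iota> u x)\<^sup>2\<bar> \<le> \<eta> * (d x * (\<iota> u x)\<^sup>2) + (1 + 1/\<eta>) * D * (\<iota> (v - u) x)\<^sup>2"
      using ae
    proof eventually_elim
      case (elim x)
      have "\<bar>d x * (\<iota> v x)\<^sup>2 - d x * (\<iota> u x)\<^sup>2\<bar> = d x * \<bar>(\<iota> u x + \<iota> (v - u) x)\<^sup>2 - (\<iota> u x)\<^sup>2\<bar>"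
        using elim d0[of x] by (simp add: abs_mult right_diff_distrib[symmetric])
      also have "\<dots> \<le> d x * (\<eta> * (\<iota> u x)\<^sup>2 + (1 + 1/\<eta>) * (\<iota> (v - u) x)\<^sup>2)"
        by (intro mult_left_mono sq_diff_bound eta d0)
      also have "\<dots> \<le> \<eta> * (d x * (\<iota> u x)\<^sup>2) + (1 + 1/\<eta>) * D * (\<iota> (v - u) x)\<^sup>2"
      proof -
        have "d x * ((1 + 1/\<eta>) * (\<iota> (v - u) x)\<^sup>2) \<le> D * ((1 + 1/\<eta>) * (\<iota> (v - u) x)\<^sup>2)"
          using eta dD[of x] by (intro mult_right_mono) auto
        then show ?thesis by (simp add: algebra_simps)
      qed
      finally show ?case .
    qed
  qed
  also have "\<dots> = \<eta> * qf \<Omega> \<iota> d u + (1 + 1/\<eta>) * D * (\<integral>x. (\<iota> (v - u) x)\<^sup>2 \<partial>lebesgue_on \<Omega>)"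
    unfolding qf_def using q_int emb_sq_int by simp
  finally show ?thesis .
qed

lemma q_cont: "continuous_on UNIV (qf \<Omega> \<iota> d)"
proof -
  obtain K where K: "K \<ge> 0" "\<And>u. (\<integral>x. (\<iota> u x)\<^sup>2 \<partial>lebesgue_on \<Omega>) \<le> K * (norm u)\<^sup>2"
    using emb_bound by blast
  have "\<exists>\<delta>>0. \<forall>v. dist v u < \<delta> \<longrightarrow> dist (qf \<Omega> \<iota> d v) (qf \<Omega> \<iota> d u) < e" if e: "e > 0" for u e
  proof -
    define \<eta> where "\<eta> = e / (2 * (qf \<Omega> \<iota> d u + 1))"
    have q0: "0 \<le> qf \<Omega> \<iota> d u" by (rule q_nonneg)
    have eta: "\<eta> > 0" unfolding \<eta>_def using e q0 by simp
    have eta2: "\<eta> * qf \<Omega> \<iota> d u < e/2" unfolding \<eta>_def using e q0 by (simp add: field_simps)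
    define C where "C = (1 + 1/\<eta>) * (D * K + 1)"
    have "0 \<le> D * K" using D_nonneg K(1) by simp
    then have "0 < D * K + 1" by linarith
    moreover have "0 < 1 + 1/\<eta>" using eta by (simp add: add_pos_pos)
    ultimately have C: "C > 0" unfolding C_def by (rule mult_pos_pos[rotated])
    define \<delta> where "\<delta> = min 1 (e / (2 * C))"
    have dpos: "\<delta> > 0" unfolding \<delta>_def using e C by simp
    have "dist (qf \<Omega> \<iota> d v) (qf \<Omega> \<iota> d u) < e" if v: "dist v u < \<delta>" for v
    proof -
      define r where "r = norm (v - u)"
      have r: "0 \<le> r" "r < 1" "r < e / (2 * C)" using v unfolding r_def \<delta>_def dist_norm by auto
      have "(1 + 1/\<eta>) * D * (\<integral>x. (\<iota> (v - u) x)\<^sup>2 \<partial>lebesgue_on \<Omega>) \<le> (1 + 1/\<eta>) * D * (K * r\<^sup>2)"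
        using K(2)[of "v - u"] eta D_nonneg unfolding r_def by (intro mult_left_mono) auto
      also have "\<dots> \<le> C * r\<^sup>2"
      proof -
        have "(1 + 1/\<eta>) * (D * K) \<le> (1 + 1/\<eta>) * (D * K + 1)" using eta by (intro mult_left_mono) auto
        then have "(1 + 1/\<eta>) * (D * K) * r\<^sup>2 \<le> (1 + 1/\<eta>) * (D * K + 1) * r\<^sup>2" by (intro mult_right_mono) auto
        then show ?thesis unfolding C_def by (simp add: mult.assoc)
      qed
      also have "\<dots> \<le> C * r"
      proof -
        have "r\<^sup>2 \<le> r" using r by (simp add: power2_eq_square mult_left_le_one_le)
        then show ?thesis using C by (intro mult_left_mono) auto
      qed
      also have "\<dots> < C * (e / (2 * C))" using r C by (intro mult_strict_left_mono) auto
      also have "C * (e / (2 * C)) = e / 2" using C by simp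
      finally have "(1 + 1/\<eta>) * D * (\<integral>x. (\<iota> (v - u) x)\<^sup>2 \<partial>lebesgue_on \<Omega>) < e/2" .
      with q_diff_bound[OF eta, of v u] eta2 show ?thesis unfolding dist_real_def by argo
    qed
    then show ?thesis using dpos by blast
  qed
  then show ?thesis unfolding continuous_on_iff by blast
qed

end
end


lemma Q_decomp:
  fixes \<Omega> :: "'a::euclidean_space set" and \<iota> :: "'v::{real_inner,complete_space} \<Rightarrow> 'a \<Rightarrow> real"
  assumes fm: "finite_measure (lebesgue_on \<Omega>)" and emb: "compact_dense_L2_embedding \<Omega> \<iota>"
    and p: "0 < p" "p < 1" and e: "0 < \<epsilon>"
  obtains d C0 where "d \<in> borel_measurable (lebesgue_on \<Omega>)" "\<And>x. 0 \<le> d x" "\<And>x. d x \<le> p/2 * \<epsilon> powr (p - 2)"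
    "\<And>L u. Qobj \<Omega> \<iota> F F' \<alpha> \<beta> p \<epsilon> uk L u = F uk + F' uk (u - uk) + L/2 * (norm (u - uk))\<^sup>2
        + \<alpha>/2 * (norm u)\<^sup>2 + \<beta> * (C0 + qf \<Omega> \<iota> d u)"
    "qf \<Omega> \<iota> d uk \<le> p/2 * (measure (lebesgue_on \<Omega>) (space (lebesgue_on \<Omega>)) + (\<integral>x. (\<iota> uk x)\<^sup>2 \<partial>lebesgue_on \<Omega>))"
proof -
  define b where "b x = (\<iota> uk x)\<^sup>2" for x
  define d where "d x = dpsi p \<epsilon> (b x)" for x
  define c where "c x = psi p \<epsilon> (b x) - d x * b x" for x
  have b0: "0 \<le> b x" for x unfolding b_def by simp
  have bm: "b \<in> borel_measurable (lebesgue_on \<Omega>)" unfolding b_def using emb_meas[OF emb] by measurable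
  have bi: "integrable (lebesgue_on \<Omega>) b" unfolding b_def by (rule emb_sq_int[OF emb])
  have psim: "psi p \<epsilon> \<in> borel_measurable borel" unfolding psi_def[abs_def] by measurable
  have dpsim: "dpsi p \<epsilon> \<in> borel_measurable borel" unfolding dpsi_def[abs_def] by measurable
  have dm: "d \<in> borel_measurable (lebesgue_on \<Omega>)" unfolding d_def using dpsim bm by measurable
  have d0: "0 \<le> d x" for x unfolding d_def using dpsi_nonneg p by simp
  have dD: "d x \<le> p/2 * \<epsilon> powr (p - 2)" for x unfolding d_def using dpsi_le p e by simp
  have db: "d x * b x \<le> p/2 * (1 + b x)" for x unfolding d_def using dpsi_t_le p e b0 by simp
  have cm: "c \<in> borel_measurable (lebesgue_on \<Omega>)" unfolding c_def using psim bm dm by measurable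
  have ci: "integrable (lebesgue_on \<Omega>) c"
  proof -
    have A: "integrable (lebesgue_on \<Omega>) (\<lambda>x. \<epsilon> powr p + 2 + 2 * b x)"
      using bi finite_measure.integrable_const[OF fm]
      by (intro Bochner_Integration.integrable_add integrable_mult_right) auto
    have C: "AE x in lebesgue_on \<Omega>. norm (c x) \<le> norm (\<epsilon> powr p + 2 + 2 * b x)"
    proof (intro AE_I2)
      fix x
      have "0 \<le> psi p \<epsilon> (b x)" "psi p \<epsilon> (b x) \<le> \<epsilon> powr p + 1 + b x"
        using psi_nonneg psi_le p e b0 by auto
      moreover have "0 \<le> d x * b x" using d0 b0 by simp
      moreover have "p/2 * (1 + b x) \<le> 1 + b x" using p b0 by (intro mult_left_le_one_le) auto
      moreover have "0 \<le> \<epsilon> powr p" by simp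
      ultimately show "norm (c x) \<le> norm (\<epsilon> powr p + 2 + 2 * b x)" unfolding c_def
        using db[of x] b0[of x] by simp
    qed
    show ?thesis by (rule Bochner_Integration.integrable_bound[OF A cm C])
  qed
  have qi: "integrable (lebesgue_on \<Omega>) (\<lambda>x. d x * (\<iota> u x)\<^sup>2)" for u
    by (rule q_int[OF emb dm d0 dD])
  have Qeq: "Qobj \<Omega> \<iota> F F' \<alpha> \<beta> p \<epsilon> uk L u = F uk + F' uk (u - uk) + L/2 * (norm (u - uk))\<^sup>2
        + \<alpha>/2 * (norm u)\<^sup>2 + \<beta> * ((\<integral>x. c x \<partial>lebesgue_on \<Omega>) + qf \<Omega> \<iota> d u)" for L u
  proof -
    have "(\<integral>x. psi p \<epsilon> ((\<iota> uk x)\<^sup>2) + dpsi p \<epsilon> ((\<iota> uk x)\<^sup>2) * ((\<iota> u x)\<^sup>2 - (\<iota> uk x)\<^sup>2) \<partial>lebesgue_on \<Omega>)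
       = (\<integral>x. c x + d x * (\<iota> u x)\<^sup>2 \<partial>lebesgue_on \<Omega>)"
      unfolding c_def d_def b_def by (rule Bochner_Integration.integral_cong) (auto simp: algebra_simps)
    also have "\<dots> = (\<integral>x. c x \<partial>lebesgue_on \<Omega>) + qf \<Omega> \<iota> d u"
      unfolding qf_def using ci qi by simp
    finally show ?thesis unfolding Qobj_def by simp
  qed
  have qb: "qf \<Omega> \<iota> d uk \<le> p/2 * (measure (lebesgue_on \<Omega>) (space (lebesgue_on \<Omega>)) + (\<integral>x. (\<iota> uk x)\<^sup>2 \<partial>lebesgue_on \<Omega>))"
  proof -
    have bi2: "integrable (lebesgue_on \<Omega>) (\<lambda>x. p/2 * (1 + b x))"
      using bi finite_measure.integrable_const[OF fm]
      by (intro Bochner_Integration.integrable_add integrable_mult_right) auto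
    have "qf \<Omega> \<iota> d uk \<le> (\<integral>x. p/2 * (1 + b x) \<partial>lebesgue_on \<Omega>)"
      unfolding qf_def
    proof (rule integral_mono[OF qi[of uk] bi2])
      fix x show "d x * (\<iota> uk x)\<^sup>2 \<le> p/2 * (1 + b x)" using db[of x] by (simp add: b_def)
    qed
    also have "\<dots> = p/2 * (measure (lebesgue_on \<Omega>) (space (lebesgue_on \<Omega>)) + (\<integral>x. b x \<partial>lebesgue_on \<Omega>))"
    proof -
      have "(\<integral>x. 1 + b x \<partial>lebesgue_on \<Omega>) = (\<integral>x. 1 \<partial>lebesgue_on \<Omega>) + (\<integral>x. b x \<partial>lebesgue_on \<Omega>)"
        by (rule Bochner_Integration.integral_add[OF finite_measure.integrable_const[OF fm] bi])
      then show ?thesis by simp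
    qed
    also have "(\<integral>x. b x \<partial>lebesgue_on \<Omega>) = (\<integral>x. (\<iota> uk x)\<^sup>2 \<partial>lebesgue_on \<Omega>)" by (simp add: b_def)
    finally show ?thesis .
  qed
  show ?thesis using that[OF dm d0 dD Qeq qb] .
qed


lemma comb_ineq:
  fixes qm qu qw F0 lm lu lw Lm Lu Lw am au aw bm bu bw c :: real
  assumes "qm = F0 + lm + Lm + am + bm" "qu = F0 + lu + Lu + au + bu" "qw = F0 + lw + Lw + aw + bw"
    "lm = (lu + lw)/2" "bm \<le> (bu + bw)/2" "Lm \<le> (Lu + Lw)/2" "am = (au + aw)/2 - c"
  shows "qm \<le> (qu + qw)/2 - c"
  using assms by (simp add: field_simps)

lemma Q_min_exists:
  fixes \<Omega> :: "'a::euclidean_space set" and \<iota> :: "'v::{real_inner,complete_space} \<Rightarrow> 'a \<Rightarrow> real"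
    and F :: "'v \<Rightarrow> real" and F' :: "'v \<Rightarrow> ('v \<Rightarrow>\<^sub>L real)"
  assumes fm: "finite_measure (lebesgue_on \<Omega>)" and emb: "compact_dense_L2_embedding \<Omega> \<iota>"
    and p: "0 < p" "p < 1" and e: "0 < \<epsilon>" and a: "\<alpha> > 0" and b: "\<beta> > 0" and L: "L \<ge> 0"
  shows "\<exists>!u. is_Qmin \<Omega> \<iota> F F' \<alpha> \<beta> p \<epsilon> uk L u"
proof -
  obtain d C0 where dm: "d \<in> borel_measurable (lebesgue_on \<Omega>)" and d0: "\<And>x. 0 \<le> d x"
    and dD: "\<And>x. d x \<le> p/2 * \<epsilon> powr (p - 2)"
    and Qeq: "\<And>L u. Qobj \<Omega> \<iota> F F' \<alpha> \<beta> p \<epsilon> uk L u = F uk + F' uk (u - uk) + L/2 * (norm (u - uk))\<^sup>2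
        + \<alpha>/2 * (norm u)\<^sup>2 + \<beta> * (C0 + qf \<Omega> \<iota> d u)"
    and "qf \<Omega> \<iota> d uk \<le> p/2 * (measure (lebesgue_on \<Omega>) (space (lebesgue_on \<Omega>)) + (\<integral>x. (\<iota> uk x)\<^sup>2 \<partial>lebesgue_on \<Omega>))"
    by (rule Q_decomp[OF fm emb p e, of F F' \<alpha> \<beta> uk], rule that, assumption+)
  define q where "q = qf \<Omega> \<iota> d"
  define Q where "Q = Qobj \<Omega> \<iota> F F' \<alpha> \<beta> p \<epsilon> uk L"
  have Qe: "Q u = F uk + F' uk (u - uk) + L/2 * (norm (u - uk))\<^sup>2 + \<alpha>/2 * (norm u)\<^sup>2 + \<beta> * (C0 + q u)" for u
    unfolding Q_def q_def by (rule Qeq)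
  have qc: "continuous_on UNIV q" unfolding q_def by (rule q_cont[OF emb dm d0 dD])
  have cont: "continuous_on UNIV Q"
  proof -
    have "Q = (\<lambda>u. F uk + F' uk (u - uk) + L/2 * (norm (u - uk))\<^sup>2 + \<alpha>/2 * (norm u)\<^sup>2 + \<beta> * (C0 + q u))"
      using Qe by auto
    moreover have "continuous_on UNIV (\<lambda>u. F uk + F' uk (u - uk) + L/2 * (norm (u - uk))\<^sup>2 + \<alpha>/2 * (norm u)\<^sup>2 + \<beta> * (C0 + q u))"
      by (intro continuous_intros qc)
    ultimately show ?thesis by simp
  qed
  have mid: "Q ((1/2) *\<^sub>R (u + w)) \<le> (Q u + Q w)/2 - \<alpha>/8 * (norm (u - w))\<^sup>2" for u w
  proof -
    define m where "m = (1/2) *\<^sub>R (u + w)"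
    have m1: "m - uk = (1/2) *\<^sub>R ((u - uk) + (w - uk))" unfolding m_def by (simp add: algebra_simps scaleR_add_left[symmetric])
    have n1: "(norm (m - uk))\<^sup>2 = ((norm (u - uk))\<^sup>2 + (norm (w - uk))\<^sup>2)/2 - (norm (u - w))\<^sup>2/4"
      unfolding m1 mid_norm_sq by simp
    have n2: "(norm m)\<^sup>2 = ((norm u)\<^sup>2 + (norm w)\<^sup>2)/2 - (norm (u - w))\<^sup>2/4"
      unfolding m_def mid_norm_sq by simp
    have l1: "F' uk (m - uk) = (F' uk (u - uk) + F' uk (w - uk))/2"
      unfolding m1 by (simp add: blinfun.scaleR_right blinfun.add_right)
    have q1: "q m \<le> (q u + q w)/2" unfolding q_def m_def by (rule q_mid[OF emb dm d0 dD])
    have hb: "\<beta> * (C0 + q m) \<le> (\<beta> * (C0 + q u) + \<beta> * (C0 + q w))/2"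
    proof -
      have "\<beta> * (C0 + q m) \<le> \<beta> * (C0 + (q u + q w)/2)" using b q1 by (intro mult_left_mono) auto
      also have "\<dots> = (\<beta> * (C0 + q u) + \<beta> * (C0 + q w))/2" by (simp add: algebra_simps)
      finally show ?thesis .
    qed
    have hL: "L/2 * (norm (m - uk))\<^sup>2 \<le> (L/2 * (norm (u - uk))\<^sup>2 + L/2 * (norm (w - uk))\<^sup>2)/2"
    proof -
      have "L/2 * (norm (m - uk))\<^sup>2 = (L/2 * (norm (u - uk))\<^sup>2 + L/2 * (norm (w - uk))\<^sup>2)/2 - L/8 * (norm (u - w))\<^sup>2"
        unfolding n1 by (simp add: algebra_simps)
      moreover have "0 \<le> L/8 * (norm (u - w))\<^sup>2" using L by simp
      ultimately show ?thesis by argo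
    qed
    have ha: "\<alpha>/2 * (norm m)\<^sup>2 = (\<alpha>/2 * (norm u)\<^sup>2 + \<alpha>/2 * (norm w)\<^sup>2)/2 - \<alpha>/8 * (norm (u - w))\<^sup>2"
      unfolding n2 by (simp add: algebra_simps)
    show ?thesis unfolding m_def[symmetric] by (rule comb_ineq[OF Qe Qe Qe l1 hb hL ha])
  qed
  have bdd: "F uk + \<beta> * C0 - norm (F' uk) * norm uk - (norm (F' uk))\<^sup>2 / (2 * \<alpha>) \<le> Q u" for u
  proof -
    define N where "N = norm (F' uk)"
    have "- (N * norm (u - uk)) \<le> F' uk (u - uk)"
      using norm_blinfun[of "F' uk" "u - uk"] unfolding N_def by simp
    moreover have "norm (u - uk) \<le> norm u + norm uk" by (rule norm_triangle_ineq4)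
    moreover have "0 \<le> N" unfolding N_def by simp
    ultimately have 1: "- (N * norm u) - N * norm uk \<le> F' uk (u - uk)"
      by (smt (verit, best) mult_left_mono distrib_left)
    have "0 \<le> (\<alpha> * norm u - N)\<^sup>2 / (2 * \<alpha>)" using a by simp
    also have "(\<alpha> * norm u - N)\<^sup>2 / (2 * \<alpha>) = \<alpha>/2 * (norm u)\<^sup>2 - N * norm u + N\<^sup>2 / (2 * \<alpha>)"
      using a by (simp add: power2_eq_square field_simps)
    finally have 2: "N * norm u \<le> \<alpha>/2 * (norm u)\<^sup>2 + N\<^sup>2 / (2 * \<alpha>)" by simp
    have 3: "0 \<le> L/2 * (norm (u - uk))\<^sup>2" using L by simp
    have 4: "\<beta> * C0 \<le> \<beta> * (C0 + q u)"
      using b q_nonneg[OF emb dm d0 dD, of u] unfolding q_def by (intro mult_left_mono) auto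
    show ?thesis unfolding Qe N_def[symmetric] using 1 2 3 4 by argo
  qed
  have a8: "\<alpha>/8 > 0" using a by simp
  have "\<exists>!u. \<forall>w. Q u \<le> Q w" by (rule strongly_convex_min[OF cont mid a8 bdd])
  then show ?thesis unfolding is_Qmin_def Q_def .
qed


lemma Q_norm_bound:
  fixes \<Omega> :: "'a::euclidean_space set" and \<iota> :: "'v::{real_inner,complete_space} \<Rightarrow> 'a \<Rightarrow> real"
    and F :: "'v \<Rightarrow> real" and F' :: "'v \<Rightarrow> ('v \<Rightarrow>\<^sub>L real)"
  assumes fm: "finite_measure (lebesgue_on \<Omega>)" and emb: "compact_dense_L2_embedding \<Omega> \<iota>"
    and p: "0 < p" "p < 1" and a: "\<alpha> > 0" and b: "\<beta> > 0"
  shows "\<exists>R. \<forall>\<epsilon> uk L w. 0 < \<epsilon> \<longrightarrow> 0 \<le> L \<longrightarrow> norm (F' uk) \<le> N \<longrightarrow> norm uk \<le> X \<longrightarrow>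
            is_Qmin \<Omega> \<iota> F F' \<alpha> \<beta> p \<epsilon> uk L w \<longrightarrow> norm w \<le> R"
proof -
  obtain K where K: "K \<ge> 0" "\<And>u. (\<integral>x. (\<iota> u x)\<^sup>2 \<partial>lebesgue_on \<Omega>) \<le> K * (norm u)\<^sup>2"
    using emb_bound[OF emb] by blast
  define meas where "meas = measure (lebesgue_on \<Omega>) (space (lebesgue_on \<Omega>))"
  have meas0: "0 \<le> meas" unfolding meas_def by simp
  define A where "A = N * X + \<alpha>/2 * X\<^sup>2 + \<beta> * (p/2 * (meas + K * X\<^sup>2))"
  define R where "R = max 1 (2 * (N + A) / \<alpha>)"
  have "norm w \<le> R" if e: "0 < \<epsilon>" and L: "0 \<le> L" and N: "norm (F' uk) \<le> N" and X: "norm uk \<le> X"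
    and mn: "is_Qmin \<Omega> \<iota> F F' \<alpha> \<beta> p \<epsilon> uk L w" for \<epsilon> uk L w
  proof -
    obtain d C0 where dm: "d \<in> borel_measurable (lebesgue_on \<Omega>)" and d0: "\<And>x. 0 \<le> d x"
      and dD: "\<And>x. d x \<le> p/2 * \<epsilon> powr (p - 2)"
      and Qeq: "\<And>L u. Qobj \<Omega> \<iota> F F' \<alpha> \<beta> p \<epsilon> uk L u = F uk + F' uk (u - uk) + L/2 * (norm (u - uk))\<^sup>2
          + \<alpha>/2 * (norm u)\<^sup>2 + \<beta> * (C0 + qf \<Omega> \<iota> d u)"
      and qb: "qf \<Omega> \<iota> d uk \<le> p/2 * (measure (lebesgue_on \<Omega>) (space (lebesgue_on \<Omega>)) + (\<integral>x. (\<iota> uk x)\<^sup>2 \<partial>lebesgue_on \<Omega>))"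
      by (rule Q_decomp[OF fm emb p e, of F F' \<alpha> \<beta> uk], rule that, assumption+)
    have N0: "0 \<le> N" using N norm_ge_zero order_trans by blast
    have X0: "0 \<le> X" using X norm_ge_zero order_trans by blast
    have "Qobj \<Omega> \<iota> F F' \<alpha> \<beta> p \<epsilon> uk L w \<le> Qobj \<Omega> \<iota> F F' \<alpha> \<beta> p \<epsilon> uk L uk"
      using mn unfolding is_Qmin_def by blast
    then have 1: "F' uk (w - uk) + L/2 * (norm (w - uk))\<^sup>2 + \<alpha>/2 * (norm w)\<^sup>2 + \<beta> * (C0 + qf \<Omega> \<iota> d w)
        \<le> \<alpha>/2 * (norm uk)\<^sup>2 + \<beta> * (C0 + qf \<Omega> \<iota> d uk)"
      unfolding Qeq by simp
    have 2: "0 \<le> L/2 * (norm (w - uk))\<^sup>2" using L by simp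
    have 3: "\<beta> * (C0 + qf \<Omega> \<iota> d w) - \<beta> * (C0 + qf \<Omega> \<iota> d uk) \<ge> - (\<beta> * (p/2 * (meas + K * X\<^sup>2)))"
    proof -
      have "qf \<Omega> \<iota> d uk \<le> p/2 * (meas + K * X\<^sup>2)"
      proof -
        have "K * (norm uk)\<^sup>2 \<le> K * X\<^sup>2" using K(1) X by (intro mult_left_mono power_mono) auto
        then have "(\<integral>x. (\<iota> uk x)\<^sup>2 \<partial>lebesgue_on \<Omega>) \<le> K * X\<^sup>2" using K(2)[of uk] by linarith
        then have "p/2 * (meas + (\<integral>x. (\<iota> uk x)\<^sup>2 \<partial>lebesgue_on \<Omega>)) \<le> p/2 * (meas + K * X\<^sup>2)"
          using p by (intro mult_left_mono) auto
        then show ?thesis using qb unfolding meas_def by linarith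
      qed
      moreover have "0 \<le> qf \<Omega> \<iota> d w" by (rule q_nonneg[OF emb dm d0 dD])
      ultimately have "qf \<Omega> \<iota> d w - qf \<Omega> \<iota> d uk \<ge> - (p/2 * (meas + K * X\<^sup>2))" by linarith
      then have "\<beta> * (qf \<Omega> \<iota> d w - qf \<Omega> \<iota> d uk) \<ge> \<beta> * (- (p/2 * (meas + K * X\<^sup>2)))"
        using b by (intro mult_left_mono) auto
      then show ?thesis by (simp add: algebra_simps)
    qed
    have 4: "- (N * (norm w + X)) \<le> F' uk (w - uk)"
    proof -
      have "\<bar>F' uk (w - uk)\<bar> \<le> norm (F' uk) * norm (w - uk)" using norm_blinfun[of "F' uk" "w - uk"] by simp
      also have "\<dots> \<le> N * (norm w + X)"
        using N X N0 norm_triangle_ineq4[of w uk] by (intro mult_mono) auto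
      finally show ?thesis by linarith
    qed
    have 5: "\<alpha>/2 * (norm uk)\<^sup>2 \<le> \<alpha>/2 * X\<^sup>2" using a X by (intro mult_left_mono power_mono) auto
    have key: "\<alpha>/2 * (norm w)\<^sup>2 \<le> N * norm w + A"
      unfolding A_def using 1 2 3 4 5 by (simp add: algebra_simps)
    have A0: "0 \<le> A" unfolding A_def using N0 X0 a b p meas0 K(1) by simp
    show ?thesis
    proof (cases "norm w \<le> 1")
      case True then show ?thesis unfolding R_def by simp
    next
      case False
      then have "N * norm w + A \<le> (N + A) * norm w" using A0 by (simp add: algebra_simps mult_le_cancel_left1)
      with key have "\<alpha>/2 * (norm w)\<^sup>2 \<le> (N + A) * norm w" by linarith
      then have "(\<alpha>/2 * norm w) * norm w \<le> (N + A) * norm w" by (simp add: power2_eq_square mult.assoc)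
      then have "\<alpha>/2 * norm w \<le> N + A" by (rule mult_right_le_imp_le) (use False in auto)
      then have "norm w \<le> 2 * (N + A) / \<alpha>" using a by (simp add: field_simps)
      then show ?thesis unfolding R_def by simp
    qed
  qed
  then show ?thesis by blast
qed

lemma descent_lemma:
  fixes F :: "'v::{real_inner,complete_space} \<Rightarrow> real" and F' :: "'v \<Rightarrow> ('v \<Rightarrow>\<^sub>L real)"
  assumes deriv: "\<And>u. (F has_derivative blinfun_apply (F' u)) (at u)"
    and lip: "\<And>x y. x \<in> cball 0 R \<Longrightarrow> y \<in> cball 0 R \<Longrightarrow> norm (F' x - F' y) \<le> M * norm (x - y)"
    and M: "0 \<le> M" and uk: "norm uk \<le> R" and w: "norm w \<le> R" and hML: "M \<le> L"
  shows "descent F F' uk L w"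
proof -
  define h where "h = w - uk"
  define g where "g t = F (uk + t *\<^sub>R h) - t * F' uk h" for t :: real
  have gd: "(g has_real_derivative (F' (uk + t *\<^sub>R h) h - F' uk h)) (at t)" for t
  proof -
    have 1: "((\<lambda>t. uk + t *\<^sub>R h) has_derivative (\<lambda>s. s *\<^sub>R h)) (at t)"
      by (auto intro!: derivative_eq_intros)
    have 2: "((\<lambda>t. F (uk + t *\<^sub>R h)) has_derivative (\<lambda>s. F' (uk + t *\<^sub>R h) (s *\<^sub>R h))) (at t)"
      using has_derivative_compose[OF 1 deriv] by simp
    have 3: "((\<lambda>t. F (uk + t *\<^sub>R h)) has_real_derivative F' (uk + t *\<^sub>R h) h) (at t)"
      by (rule has_derivative_imp_has_field_derivative[OF 2]) (simp add: blinfun.scaleR_right)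
    have 4: "((\<lambda>t. t * F' uk h) has_real_derivative F' uk h) (at t)"
      by (auto intro!: derivative_eq_intros)
    show ?thesis unfolding g_def by (rule DERIV_diff[OF 3 4])
  qed
  obtain z where z: "0 < z" "z < 1" "g 1 - g 0 = (1 - 0) * (F' (uk + z *\<^sub>R h) h - F' uk h)"
    using MVT2[of 0 1 g "\<lambda>t. F' (uk + t *\<^sub>R h) h - F' uk h"] gd by auto
  have zin: "uk + z *\<^sub>R h \<in> cball 0 R"
  proof -
    have "uk + z *\<^sub>R h = (1 - z) *\<^sub>R uk + z *\<^sub>R w" unfolding h_def by (simp add: algebra_simps)
    then have "norm (uk + z *\<^sub>R h) \<le> (1 - z) * norm uk + z * norm w"
      using z by (metis norm_triangle_le norm_scaleR abs_of_nonneg less_imp_le diff_ge_0_iff_ge order_refl)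
    also have "\<dots> \<le> (1 - z) * R + z * R" using z uk w by (intro add_mono mult_left_mono) auto
    finally show ?thesis by (simp add: algebra_simps)
  qed
  have ukin: "uk \<in> cball 0 R" using uk by simp
  have "\<bar>F' (uk + z *\<^sub>R h) h - F' uk h\<bar> \<le> norm (F' (uk + z *\<^sub>R h) - F' uk) * norm h"
    using norm_blinfun[of "F' (uk + z *\<^sub>R h) - F' uk" h] by (simp add: blinfun.diff_left)
  also have "\<dots> \<le> M * norm (z *\<^sub>R h) * norm h" using lip[OF zin ukin] by (intro mult_right_mono) auto
  also have "\<dots> \<le> M * norm h * norm h"
  proof -
    have "z * norm h \<le> 1 * norm h" using z by (intro mult_right_mono) auto
    then show ?thesis using z M by (intro mult_right_mono mult_left_mono) auto
  qed
  also have "\<dots> \<le> L * (norm h)\<^sup>2" using hML by (simp add: power2_eq_square mult.assoc mult_right_mono)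
  finally have "g 1 - g 0 \<le> L * (norm h)\<^sup>2" using z by simp
  then show ?thesis unfolding descent_def g_def h_def by simp
qed


lemma Lset_nonneg: "Ltil > 0 \<Longrightarrow> \<gamma> > 1 \<Longrightarrow> x \<in> Lset Ltil \<gamma> \<Longrightarrow> 0 \<le> x"
  unfolding Lset_def by auto

theorem lemma7p2:
  fixes \<Omega> :: "'a::euclidean_space set"
    and \<iota> :: "'v::{real_inner,complete_space} \<Rightarrow> 'a \<Rightarrow> real"
    and F :: "'v \<Rightarrow> real" and F' :: "'v \<Rightarrow> ('v \<Rightarrow>\<^sub>L real)"
    and \<alpha> \<beta> p :: real
  assumes "bounded_lipschitz_domain \<Omega>"
    and "compact_dense_L2_embedding \<Omega> \<iota>"
    and "assumption_I_F F F'"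
    and "\<alpha> > 0" and "\<beta> > 0" and "0 < p" and "p < 1"
  shows "(\<forall>uk \<epsilon> \<gamma> Ltil. \<epsilon> > 0 \<longrightarrow> \<gamma> > 1 \<longrightarrow> Ltil > 0 \<longrightarrow>
            (\<exists>L\<in>Lset Ltil \<gamma>.
               (\<exists>!u. is_Qmin \<Omega> \<iota> F F' \<alpha> \<beta> p \<epsilon> uk L u) \<and>
               (\<forall>u. is_Qmin \<Omega> \<iota> F F' \<alpha> \<beta> p \<epsilon> uk L u \<longrightarrow> descent F F' uk L u)))
       \<and> (\<forall>\<gamma> Ltil eps u Lk. algorithm_A \<Omega> \<iota> F F' \<alpha> \<beta> p \<gamma> Ltil eps u Lk \<longrightarrow>
            bounded (range u) \<longrightarrow> bounded (range Lk))"
proof -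
  note emb = assms(2) and a = assms(4) and b = assms(5) and p = assms(6,7)
  have fm: "finite_measure (lebesgue_on \<Omega>)" using assms(1) unfolding bounded_lipschitz_domain_def
    by (simp add: bounded_set_imp_lmeasurable finite_measure_lebesgue_on)
  have deriv: "\<And>u. (F has_derivative blinfun_apply (F' u)) (at u)"
    using assms(3) unfolding assumption_I_F_def standing_F_def by blast
  have lipM: "\<exists>M\<ge>0. \<forall>x y. x \<in> cball 0 R \<longrightarrow> y \<in> cball 0 R \<longrightarrow> norm (F' x - F' y) \<le> M * norm (x - y)" for R
  proof -
    obtain M where M: "\<forall>x\<in>cball 0 R. \<forall>y\<in>cball 0 R. norm (F' x - F' y) \<le> M * norm (x - y)"
      using assms(3) unfolding assumption_I_F_def by (meson bounded_cball)
    have "norm (F' x - F' y) \<le> max M 0 * norm (x - y)" if "x \<in> cball 0 R" "y \<in> cball 0 R" for x y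
      using M that by (smt (verit) mult_right_mono norm_ge_zero)
    then show ?thesis by (intro exI[of _ "max M 0"]) auto
  qed
  have part1: "\<exists>L\<in>Lset Ltil \<gamma>.
               (\<exists>!u. is_Qmin \<Omega> \<iota> F F' \<alpha> \<beta> p \<epsilon> uk L u) \<and>
               (\<forall>u. is_Qmin \<Omega> \<iota> F F' \<alpha> \<beta> p \<epsilon> uk L u \<longrightarrow> descent F F' uk L u)"
    if e: "\<epsilon> > 0" and g: "\<gamma> > 1" and Lt: "Ltil > 0" for uk \<epsilon> \<gamma> Ltil
  proof -
    obtain R0 where R0: "\<forall>\<epsilon> uk' L w. 0 < \<epsilon> \<longrightarrow> 0 \<le> L \<longrightarrow> norm (F' uk') \<le> norm (F' uk) \<longrightarrow> norm uk' \<le> norm uk \<longrightarrow>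
            is_Qmin \<Omega> \<iota> F F' \<alpha> \<beta> p \<epsilon> uk' L w \<longrightarrow> norm w \<le> R0"
      using Q_norm_bound[OF fm emb p a b, of F' "norm (F' uk)" "norm uk" F] by blast
    define R where "R = max (norm uk) R0"
    obtain M where M: "M \<ge> 0" "\<And>x y. x \<in> cball 0 R \<Longrightarrow> y \<in> cball 0 R \<Longrightarrow> norm (F' x - F' y) \<le> M * norm (x - y)"
      using lipM[of R] by blast
    obtain l where l: "M / Ltil < \<gamma> ^ l" using real_arch_pow[OF g] by blast
    define L where "L = Ltil * \<gamma> ^ l"
    have hML: "M \<le> L" unfolding L_def using l Lt by (simp add: field_simps)
    have L0: "0 \<le> L" using M(1) hML by linarith
    have LL: "L \<in> Lset Ltil \<gamma>" unfolding Lset_def L_def by auto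
    have "\<exists>!u. is_Qmin \<Omega> \<iota> F F' \<alpha> \<beta> p \<epsilon> uk L u" by (rule Q_min_exists[OF fm emb p e a b L0])
    moreover have "descent F F' uk L u" if "is_Qmin \<Omega> \<iota> F F' \<alpha> \<beta> p \<epsilon> uk L u" for u
    proof (rule descent_lemma[OF deriv M(2) M(1)])
      show "norm uk \<le> R" unfolding R_def by simp
      have "norm u \<le> R0" using R0 e L0 that by blast
      then show "norm u \<le> R" unfolding R_def by simp
      show "M \<le> L" by (rule hML)
    qed
    ultimately show ?thesis using LL by blast
  qed
  have part2: "bounded (range Lk)"
    if alg: "algorithm_A \<Omega> \<iota> F F' \<alpha> \<beta> p \<gamma> Ltil eps u Lk" and bu: "bounded (range u)" for \<gamma> Ltil eps u Lk
  proof -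
    have g: "\<gamma> > 1" and Lt: "Ltil > 0" and ep: "\<And>k. eps k > 0"
      and cl: "\<And>k. Lk k \<in> Lset Ltil \<gamma> \<and>
          is_Qmin \<Omega> \<iota> F F' \<alpha> \<beta> p (eps k) (u k) (Lk k) (u (Suc k)) \<and>
          descent F F' (u k) (Lk k) (u (Suc k)) \<and>
          (\<forall>L'\<in>Lset Ltil \<gamma>. L' < Lk k \<longrightarrow>
             (\<forall>w. is_Qmin \<Omega> \<iota> F F' \<alpha> \<beta> p (eps k) (u k) L' w \<longrightarrow> \<not> descent F F' (u k) L' w))"
      using alg unfolding algorithm_A_def by auto
    obtain X1 where X1: "\<And>k. norm (u k) \<le> X1" using bu unfolding bounded_iff by auto
    define X where "X = max X1 0"
    have X: "norm (u k) \<le> X" "0 \<le> X" for k using X1[of k] unfolding X_def by auto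
    obtain M1 where M1: "M1 \<ge> 0" "\<And>x y. x \<in> cball 0 X \<Longrightarrow> y \<in> cball 0 X \<Longrightarrow> norm (F' x - F' y) \<le> M1 * norm (x - y)"
      using lipM[of X] by blast
    define N where "N = norm (F' 0) + M1 * X"
    have N: "norm (F' (u k)) \<le> N" for k
    proof -
      have "norm (F' (u k) - F' 0) \<le> M1 * norm (u k - 0)" using M1(2)[of "u k" 0] X(1)[of k] X(2) by simp
      also have "\<dots> \<le> M1 * X" using X(1)[of k] M1(1) by (intro mult_left_mono) auto
      finally show ?thesis unfolding N_def using norm_triangle_ineq2[of "F' (u k)" "F' 0"] by linarith
    qed
    obtain R0 where R0: "\<forall>\<epsilon> uk' L w. 0 < \<epsilon> \<longrightarrow> 0 \<le> L \<longrightarrow> norm (F' uk') \<le> N \<longrightarrow> norm uk' \<le> X \<longrightarrow>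
            is_Qmin \<Omega> \<iota> F F' \<alpha> \<beta> p \<epsilon> uk' L w \<longrightarrow> norm w \<le> R0"
      using Q_norm_bound[OF fm emb p a b, of F' N X F] by blast
    define R where "R = max X R0"
    obtain M where M: "M \<ge> 0" "\<And>x y. x \<in> cball 0 R \<Longrightarrow> y \<in> cball 0 R \<Longrightarrow> norm (F' x - F' y) \<le> M * norm (x - y)"
      using lipM[of R] by blast
    have Lkb: "Lk k \<le> max Ltil (\<gamma> * M)" for k
    proof (rule ccontr)
      assume nb: "\<not> Lk k \<le> max Ltil (\<gamma> * M)"
      have "Lk k \<in> Lset Ltil \<gamma>" using cl by blast
      then obtain l where l: "Lk k = Ltil * \<gamma> ^ l" using nb Lt g unfolding Lset_def by auto
      show False
      proof (cases l)
        case 0 then show False using l nb by simp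
      next
        case (Suc j)
        define L' where "L' = Ltil * \<gamma> ^ j"
        have LkL: "Lk k = \<gamma> * L'" unfolding L'_def using l Suc by simp
        have L'pos: "0 < L'" unfolding L'_def using Lt g by simp
        have "\<gamma> * M < \<gamma> * L'" using nb LkL by simp
        then have hML: "M \<le> L'" using g by simp
        have lt: "L' < Lk k" unfolding LkL using g L'pos by simp
        have L'in: "L' \<in> Lset Ltil \<gamma>" unfolding Lset_def L'_def by auto
        obtain w where w: "is_Qmin \<Omega> \<iota> F F' \<alpha> \<beta> p (eps k) (u k) L' w"
          using Q_min_exists[OF fm emb p ep[of k] a b, of L' F F' "u k"] L'pos by auto
        have "descent F F' (u k) L' w"
        proof (rule descent_lemma[OF deriv M(2) M(1)])
          show "norm (u k) \<le> R" unfolding R_def using X(1)[of k] by simp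
          have "norm w \<le> R0" using R0 ep[of k] L'pos N[of k] X(1)[of k] w by (meson less_imp_le)
          then show "norm w \<le> R" unfolding R_def by simp
          show "M \<le> L'" by (rule hML)
        qed
        then show False using cl[of k] L'in lt w by blast
      qed
    qed
    have "\<bar>Lk k\<bar> \<le> max Ltil (\<gamma> * M)" for k
      using Lkb[of k] Lset_nonneg[OF Lt g, of "Lk k"] cl[of k] by auto
    then show ?thesis unfolding bounded_iff by auto
  qed
  show ?thesis using part1 part2 by blast
qed


end
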